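(* Let $\mathcal{M}=(\pi,x)$ be an incentive compatible auction mechanism with display prices. Then for every advertiser $i$, every display price profile $\mathbf{p}$ and every cost-report profile $\mathbf{c}'_{-i}$ of the others, there is a quantity $U_i(\mathbf{c}'_{-i},\mathbf{p})$ not depending on $i$'s cost report such that for all $c_i\in[\underline{c}_i,\overline{c}_i]$, $$x_i(c_i,\mathbf{c}'_{-i},\mathbf{p})=v_i(c_i,p_i)\pi_i(c_i,\mathbf{c}'_{-i},\mathbf{p})-\lambda_i(p_i)\int_{c_i}^{\overline{c}_i}\pi_i(z,\mathbf{c}'_{-i},\mathbf{p})\,dz-U_i(\mathbf{c}'_{-i},\mathbf{p}).$$
   Context: There are advertisers $N=\{1,\dots,n\}$ competing for a single ad slot. Advertiser $i$ has a private product cost $c_i\in[\underline{c}_i,\overline{c}_i]$ and sets a display price $p_i$. Her conversion-rate function is $\lambda_i:\mathbb{R}\to(0,1]$, and her value when displayed at price $p_i$ is $v_i(c_i,p_i)=(p_i-c_i)\lambda_i(p_i)$. Each advertiser reports a cost $c_i'$ and a display price $p_i$; write $\mathbf{c}'=(c_i',\mathbf{c}'_{-i})$, $\mathbf{p}=(p_i,\mathbf{p}_{-i})$. An auction mechanism $\mathcal{M}=(\pi,x)$ consists of allocation functions $\pi_i(\mathbf{c}',\mathbf{p})\in\{0,1\}$ (at most one advertiser wins the slot) and payment functions $x_i(\mathbf{c}',\mathbf{p})\in\mathbb{R}$. The utility of advertiser $i$ with true cost $c_i$ is $u_i(c_i,\mathbf{c}',\mathbf{p},\mathcal{M})=v_i(c_i,p_i)\pi_i(\mathbf{c}',\mathbf{p})-x_i(\mathbf{c}',\mathbf{p})$.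 $\mathcal{M}$ is incentive compatible (IC) if for all $i$, all $c_i$, all $\mathbf{p}$ and all $\mathbf{c}'$: $u_i(c_i,(c_i,\mathbf{c}'_{-i}),\mathbf{p},\mathcal{M})\ge u_i(c_i,(c_i',\mathbf{c}'_{-i}),\mathbf{p},\mathcal{M})$. *)

theory Defs
  imports "HOL-Analysis.Analysis"
begin

text \<open>Cost reports and display
prices are profiles 'i => real. An allocation rule alloc i c' p and a payment rule
x i c' p take advertiser i, the reported-cost profile c' and the price profile p.\<close>

definition value_fn :: "('i \<Rightarrow> real \<Rightarrow> real) \<Rightarrow> 'i \<Rightarrow> real \<Rightarrow> real \<Rightarrow> real" where
  "value_fn lam i c pr = (pr - c) * lam i pr"

definition utility ::
  "('i \<Rightarrow> real \<Rightarrow> real) \<Rightarrow> ('i \<Rightarrow> ('i \<Rightarrow> real) \<Rightarrow> ('i \<Rightarrow> real) \<Rightarrow> real)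
   \<Rightarrow> ('i \<Rightarrow> ('i \<Rightarrow> real) \<Rightarrow> ('i \<Rightarrow> real) \<Rightarrow> real)
   \<Rightarrow> 'i \<Rightarrow> real \<Rightarrow> ('i \<Rightarrow> real) \<Rightarrow> ('i \<Rightarrow> real) \<Rightarrow> real" where
  "utility lam alloc x i c c' p = value_fn lam i c (p i) * alloc i c' p - x i c' p"

definition mechanism :: "('i::finite \<Rightarrow> ('i \<Rightarrow> real) \<Rightarrow> ('i \<Rightarrow> real) \<Rightarrow> real) \<Rightarrow> bool" where
  "mechanism alloc \<longleftrightarrow> (\<forall>c' p. (\<forall>i. alloc i c' p \<in> {0, 1}) \<and> (\<Sum>i\<in>UNIV. alloc i c' p) \<le> 1)"

definition IC ::
  "('i \<Rightarrow> real \<Rightarrow> real) \<Rightarrow> ('i \<Rightarrow> real) \<Rightarrow> ('i \<Rightarrow> real)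
   \<Rightarrow> ('i \<Rightarrow> ('i \<Rightarrow> real) \<Rightarrow> ('i \<Rightarrow> real) \<Rightarrow> real)
   \<Rightarrow> ('i \<Rightarrow> ('i \<Rightarrow> real) \<Rightarrow> ('i \<Rightarrow> real) \<Rightarrow> real) \<Rightarrow> bool" where
  "IC lam cl cu alloc x \<longleftrightarrow>
    (\<forall>i c p c'. c \<in> {cl i..cu i} \<longrightarrow> c' i \<in> {cl i..cu i} \<longrightarrow>
       utility lam alloc x i c (c'(i := c)) p \<ge> utility lam alloc x i c c' p)"

end

theory Submission
  imports Defs
begin

theorem lemma2:
  fixes lam :: "'i::finite \<Rightarrow> real \<Rightarrow> real"
    and cl cu :: "'i \<Rightarrow> real"
    and alloc x :: "'i \<Rightarrow> ('i \<Rightarrow> real) \<Rightarrow> ('i \<Rightarrow> real) \<Rightarrow> real"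
  assumes lam_range: "\<And>i r. 0 < lam i r \<and> lam i r \<le> 1"
    and mech: "mechanism alloc"
    and ic: "IC lam cl cu alloc x"
  shows "\<forall>i p c'. \<exists>U::real. \<forall>c \<in> {cl i..cu i}.
           x i (c'(i := c)) p =
             value_fn lam i c (p i) * alloc i (c'(i := c)) p
             - lam i (p i) * integral {c..cu i} (\<lambda>z. alloc i (c'(i := z)) p)
             - U"
proof (intro allI)
  fix i p and c' :: "'i \<Rightarrow> real"
  define L where "L = lam i (p i)"
  define a where "a = (\<lambda>z. alloc i (c'(i:=z)) p)"
  define X where "X = (\<lambda>z. x i (c'(i:=z)) p)"
  define V where "V = (\<lambda>z. (p i - z) * L * a z - X z)"
  have L: "L > 0" using lam_range unfolding L_def by blast
  have a01: "\<And>z. a z = 0 \<or> a z = 1" using mech unfolding mechanism_def a_def by blast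
  have K: "V z + (z - c) * L * a z \<le> V c"
    if c: "c \<in> {cl i..cu i}" and z: "z \<in> {cl i..cu i}" for c z
  proof -
    have "utility lam alloc x i c ((c'(i:=z))(i := c)) p \<ge> utility lam alloc x i c (c'(i:=z)) p"
    proof -
      have "\<forall>i c p c'. c \<in> {cl i..cu i} \<longrightarrow> c' i \<in> {cl i..cu i} \<longrightarrow>
       utility lam alloc x i c (c'(i := c)) p \<ge> utility lam alloc x i c c' p"
        using ic unfolding IC_def by blast
      then have "utility lam alloc x i c ((c'(i:=z))(i := c)) p \<ge> utility lam alloc x i c (c'(i:=z)) p"
        using c z by (metis fun_upd_same)
      then show ?thesis .
    qed
    then have "(p i - c) * L * a c - X c \<ge> (p i - c) * L * a z - X z"
      by (simp add: utility_def value_fn_def a_def X_def L_def)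
    then show ?thesis unfolding V_def by (simp add: algebra_simps)
  qed
  have mono: "a w \<le> a z" if z: "z \<in> {cl i..cu i}" and w: "w \<in> {cl i..cu i}" and zw: "z < w" for z w
  proof (rule ccontr)
    assume "\<not> a w \<le> a z"
    then have "a w = 1" "a z = 0" using a01[of w] a01[of z] by auto
    moreover have "V w + (w - z) * L * a w \<le> V z" using K z w by blast
    moreover have "V z + (z - w) * L * a z \<le> V w" using K z w by blast
    ultimately have "(w - z) * L \<le> 0" by simp
    moreover have "(w - z) * L > 0" using zw L by simp
    ultimately show False by simp
  qed
  have main: "V c - V (cu i) = L * integral {c..cu i} a" if c: "c \<in> {cl i..cu i}" for c
  proof (cases "a c = 0")
    case True
    have az: "a z = 0" if "z \<in> {c..cu i}" for z
    proof (cases "z = c")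
      case False
      then have "a z \<le> a c" using mono[of c z] c that by auto
      then show ?thesis using True a01[of z] by auto
    qed (use True in simp)
    have "integral {c..cu i} a = integral {c..cu i} (\<lambda>_. 0)"
      by (rule integral_cong) (use az in auto)
    then have I: "integral {c..cu i} a = 0" by simp
    have cu: "cu i \<in> {cl i..cu i}" using c by auto
    have "V (cu i) + (cu i - c) * L * a (cu i) \<le> V c" using K[OF c cu] .
    moreover have "V c + (c - cu i) * L * a c \<le> V (cu i)" using K[OF cu c] .
    moreover have "a (cu i) = 0" using az c by auto
    ultimately show ?thesis using True I by simp
  next
    case False
    then have ac: "a c = 1" using a01 by blast
    have cu: "cu i \<in> {cl i..cu i}" using c by auto
    define S where "S = {z \<in> {c..cu i}. a z = 1}"
    define t where "t = Sup S"
    have cS: "c \<in> S" using c ac S_def by auto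
    have bdd: "bdd_above S" unfolding S_def by (rule bdd_aboveI[of _ "cu i"]) auto
    have ct: "c \<le> t" unfolding t_def using cS bdd by (rule cSup_upper)
    have tcu: "t \<le> cu i" unfolding t_def using cS by (intro cSup_least) (auto simp: S_def)
    have below: "a z = 1" if "c \<le> z" "z < t" for z
    proof -
      obtain w where w: "w \<in> S" "z < w" using less_cSup_iff[of S z] cS bdd \<open>z < t\<close> t_def by auto
      have "a w \<le> a z" using mono[of z w] w c that tcu unfolding S_def by auto
      then show ?thesis using w a01[of z] unfolding S_def by auto
    qed
    have above: "a z = 0" if "t < z" "z \<le> cu i" for z
    proof -
      have "z \<notin> S" using cSup_upper[OF _ bdd, of z] that t_def by auto
      then show ?thesis using a01[of z] that ct unfolding S_def by auto
    qed
    have i1: "(a has_integral (t - c)) {c..t}"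
    proof (rule has_integral_spike[of "{t}" _ _ "\<lambda>_. 1"])
      show "((\<lambda>_. 1::real) has_integral (t - c)) {c..t}"
        using has_integral_const_real[of "1::real" c t] ct by (simp add: content_real)
    qed (use below in auto)
    have i2: "(a has_integral 0) {t..cu i}"
    proof (rule has_integral_spike[of "{t}" _ _ "\<lambda>_. 0"])
      show "((\<lambda>_. 0::real) has_integral 0) {t..cu i}" by simp
    qed (use above in auto)
    have "(a has_integral (t - c + 0)) {c..cu i}"
      by (rule has_integral_combine[OF ct tcu i1 i2])
    then have I: "integral {c..cu i} a = t - c" by (simp add: integral_unique)
    define D where "D = V c - V (cu i)"
    define e where "e = D / L + c"
    have De: "D = (e - c) * L" unfolding e_def using L by (simp add: field_simps)
    have lowz: "z \<le> e" if "z \<in> S" for z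
    proof -
      have z: "z \<in> {cl i..cu i}" "a z = 1" using that c unfolding S_def by auto
      have "V z + (z - c) * L * a z \<le> V c" using K[OF c z(1)] .
      moreover have "V (cu i) + (cu i - z) * L * a (cu i) \<le> V z" using K[OF z(1) cu] .
      moreover have "(cu i - z) * L * a (cu i) \<ge> 0" using a01[of "cu i"] L that unfolding S_def by auto
      ultimately have "(z - c) * L \<le> (e - c) * L" using z De D_def by simp
      then show ?thesis using L by simp
    qed
    have te: "t \<le> e" unfolding t_def using cS lowz by (intro cSup_least) auto
    have upz: "e \<le> z" if "z \<in> {c..cu i}" "a z = 0" for z
    proof -
      have z: "z \<in> {cl i..cu i}" using that c by auto
      have "V c + (c - z) * L * a c \<le> V z" using K[OF z c] .
      moreover have "V z + (z - cu i) * L * a z \<le> V (cu i)" using K[OF cu z] .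
      ultimately have "(e - c) * L \<le> (z - c) * L" using that ac De D_def by (simp add: algebra_simps)
      then show ?thesis using L by simp
    qed
    have ecu: "e \<le> cu i"
    proof -
      have "V c + (c - cu i) * L * a c \<le> V (cu i)" using K[OF cu c] .
      then have "(e - c) * L \<le> (cu i - c) * L" using ac De D_def by (simp add: algebra_simps)
      then show ?thesis using L by simp
    qed
    have "e \<le> t"
    proof (rule ccontr)
      assume "\<not> e \<le> t"
      define z where "z = (t + e) / 2"
      have "t < z" "z < e" "z \<le> cu i" using \<open>\<not> e \<le> t\<close> ecu unfolding z_def by auto
      then have "a z = 0" using above by auto
      then have "e \<le> z" using upz \<open>t < z\<close> \<open>z \<le> cu i\<close> ct by auto
      then show False using \<open>z < e\<close> by simp
    qed
    then have "e = t" using te by simp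
    then show ?thesis using De D_def I by simp
  qed
  show "\<exists>U. \<forall>c\<in>{cl i..cu i}. x i (c'(i := c)) p =
             value_fn lam i c (p i) * alloc i (c'(i := c)) p
             - lam i (p i) * integral {c..cu i} (\<lambda>z. alloc i (c'(i := z)) p) - U"
  proof (intro exI ballI)
    fix c assume c: "c \<in> {cl i..cu i}"
    have "V c - V (cu i) = L * integral {c..cu i} a" using main[OF c] .
    then show "x i (c'(i := c)) p =
             value_fn lam i c (p i) * alloc i (c'(i := c)) p
             - lam i (p i) * integral {c..cu i} (\<lambda>z. alloc i (c'(i := z)) p) - V (cu i)"
      unfolding V_def value_fn_def by (simp add: a_def X_def L_def algebra_simps)
  qed
qed

end
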